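(* Let $t,w,w',n,g$ be positive integers. If there exists a Steiner system $\mathrm{S}(t,w',n)$ and a $\mathrm{GMHP}^*(t,w,w',g)$, then there exists a $\mathrm{GMHP}^*(t,w,n,g)$.
   Context: A Steiner system $\mathrm{S}(t,k,n)$ is a pair $(X,\mathcal{B})$ with $|X|=n$ and $\mathcal{B}$ a family of $k$-subsets (blocks) of $X$ such that every $t$-subset of $X$ lies in exactly one block. For a set $Y$ of size $m$, let $X=Y\times[g]$ with groups $\{y\}\times[g]$, $y\in Y$. An H-packing $\mathrm{HP}(m,g,w,t)$ is a family of $w$-subsets (blocks) of $X$, each meeting every group in at most one point, such that every $t$-subset of $X$ with points in $t$ distinct groups lies in at most one block. A block $\{(y_1,a_1),\dots,(y_w,a_w)\}$ is identified with the word indexed by $Y$ over $\{0\}\cup[g]$ with entry $a_s$ at coordinate $y_s$ and $0$ elsewhere. A $\mathrm{GMHP}^*(t,w,m,g)$ is an $\mathrm{HP}(m,g,w,t)$ in which any two distinct blocks have Hamming distance at least $2(w-t+1)$ and which has exactly $g^{t-1}\binom{m}{t}/\binom{w}{t}$ blocks. *)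

theory Defs
  imports Complex_Main
begin

definition steiner_system :: "nat \<Rightarrow> nat \<Rightarrow> 'a set \<Rightarrow> 'a set set \<Rightarrow> bool" where
  "steiner_system t k X B \<longleftrightarrow>
     (\<forall>b\<in>B. b \<subseteq> X \<and> card b = k) \<and>
     (\<forall>T. T \<subseteq> X \<longrightarrow> card T = t \<longrightarrow> (\<exists>!b. b \<in> B \<and> T \<subseteq> b))"

definition exists_steiner :: "nat \<Rightarrow> nat \<Rightarrow> nat \<Rightarrow> bool" where
  "exists_steiner t k n \<longleftrightarrow>
     (\<exists>(X::nat set) B. finite X \<and> card X = n \<and> steiner_system t k X B)"

text \<open>Point set Y \<times> [g], with groups {y} \<times> [g].\<close>
definition hpoints :: "'a set \<Rightarrow> nat \<Rightarrow> ('a \<times> nat) set" where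
  "hpoints Y g = Y \<times> {1..g}"

definition h_packing :: "'a set \<Rightarrow> nat \<Rightarrow> nat \<Rightarrow> nat \<Rightarrow> ('a \<times> nat) set set \<Rightarrow> bool" where
  "h_packing Y g w t B \<longleftrightarrow>
     (\<forall>b\<in>B. b \<subseteq> hpoints Y g \<and> card b = w \<and> inj_on fst b) \<and>
     (\<forall>T. T \<subseteq> hpoints Y g \<longrightarrow> card T = t \<longrightarrow> inj_on fst T \<longrightarrow>
          card {b\<in>B. T \<subseteq> b} \<le> 1)"

definition block_word :: "('a \<times> nat) set \<Rightarrow> 'a \<Rightarrow> nat" where
  "block_word b y = (if (\<exists>a. (y, a) \<in> b) then (THE a. (y, a) \<in> b) else 0)"

definition hamming_dist :: "'a set \<Rightarrow> ('a \<Rightarrow> nat) \<Rightarrow> ('a \<Rightarrow> nat) \<Rightarrow> nat" where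
  "hamming_dist Y u v = card {y\<in>Y. u y \<noteq> v y}"

definition gmhp_star :: "nat \<Rightarrow> nat \<Rightarrow> 'a set \<Rightarrow> nat \<Rightarrow> ('a \<times> nat) set set \<Rightarrow> bool" where
  "gmhp_star t w Y g B \<longleftrightarrow>
     h_packing Y g w t B \<and>
     (\<forall>b\<in>B. \<forall>b'\<in>B. b \<noteq> b' \<longrightarrow>
        hamming_dist Y (block_word b) (block_word b') \<ge> 2 * (w - t + 1)) \<and>
     finite B \<and>
     (of_nat (card B) :: rat) = of_nat (g ^ (t - 1) * (card Y choose t)) / of_nat (w choose t)"

definition exists_gmhp_star :: "nat \<Rightarrow> nat \<Rightarrow> nat \<Rightarrow> nat \<Rightarrow> bool" where
  "exists_gmhp_star t w m g \<longleftrightarrow>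
     (\<exists>(Y::nat set) B. finite Y \<and> card Y = m \<and> gmhp_star t w Y g B)"

end

theory Submission
  imports Defs
begin

lemma bw_mem: assumes "inj_on fst c" "(y,a) \<in> c" shows "block_word c y = a"
proof -
  have u: "a' = a" if "(y,a') \<in> c" for a'
    using inj_onD[OF assms(1) _ that assms(2)] by simp
  have "(THE a. (y,a) \<in> c) = a" by (rule the_equality[where P="\<lambda>a. (y,a) \<in> c", OF assms(2) u])
  thus ?thesis using assms(2) unfolding block_word_def by auto
qed

lemma bw_notmem: assumes "y \<notin> fst ` c" shows "block_word c y = 0"
  using assms unfolding block_word_def by force

lemma bw_pos: assumes "c \<subseteq> Z \<times> {1..g}" "inj_on fst c" "y \<in> fst ` c" shows "block_word c y \<noteq> 0"
proof -
  obtain a where a: "(y,a) \<in> c" using assms(3) by force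
  then show ?thesis using bw_mem[OF assms(2) a] assms(1) by fastforce
qed

definition emb :: "('a \<Rightarrow> 'b) \<Rightarrow> ('a \<times> nat) set \<Rightarrow> ('b \<times> nat) set" where
  "emb h c = (\<lambda>(y,a). (h y, a)) ` c"

lemma emb_inj_fst: assumes "inj_on h Y" "fst ` c \<subseteq> Y" "inj_on fst c"
  shows "inj_on fst (emb h c)"
proof (rule inj_onI)
  fix p q assume p: "p \<in> emb h c" and q: "q \<in> emb h c" and e: "fst p = fst q"
  obtain y a where ya: "(y,a) \<in> c" "p = (h y, a)" using p unfolding emb_def by auto
  obtain y' a' where ya': "(y',a') \<in> c" "q = (h y', a')" using q unfolding emb_def by auto
  have "y \<in> Y" "y' \<in> Y" using ya(1) ya'(1) assms(2) by force+
  moreover have "h y = h y'" using e ya ya' by simp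
  ultimately have "y = y'" using assms(1) by (simp add: inj_on_eq_iff)
  then have "(y,a) = (y',a')" using inj_onD[OF assms(3) _ ya(1) ya'(1)] by simp
  then show "p = q" using ya ya' by simp
qed

lemma emb_inj: assumes "inj_on h Y" "fst ` c \<subseteq> Y"
  shows "inj_on (\<lambda>(y,a). (h y, a)) c"
proof (rule inj_onI)
  fix p q assume p: "p \<in> c" and q: "q \<in> c" and e: "(\<lambda>(y,a). (h y, a)) p = (\<lambda>(y,a). (h y, a)) q"
  obtain y a where ya: "p = (y,a)" by fastforce
  obtain y' a' where ya': "q = (y',a')" by fastforce
  have "y \<in> Y" "y' \<in> Y" using p q ya ya' assms(2) by force+
  moreover have "h y = h y'" "a = a'" using e ya ya' by simp_all
  ultimately show "p = q" using assms(1) ya ya' by (simp add: inj_on_eq_iff)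
qed

lemma emb_card: assumes "inj_on h Y" "fst ` c \<subseteq> Y" shows "card (emb h c) = card c"
  unfolding emb_def using card_image[OF emb_inj[OF assms]] .

lemma emb_fst: "fst ` emb h c = h ` fst ` c"
  unfolding emb_def by force

lemma emb_bw_in: assumes "inj_on h Y" "fst ` c \<subseteq> Y" "inj_on fst c" "y \<in> Y"
  shows "block_word (emb h c) (h y) = block_word c y"
proof (cases "y \<in> fst ` c")
  case True then obtain a where a: "(y,a) \<in> c" by force
  then have "(h y, a) \<in> emb h c" unfolding emb_def by force
  then show ?thesis using bw_mem[OF emb_inj_fst[OF assms(1-3)]] bw_mem[OF assms(3) a] by simp
next
  case False
  then have "h y \<notin> fst ` emb h c" using assms unfolding emb_fst
    by (metis image_mono inj_on_image_mem_iff)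
  then show ?thesis using bw_notmem False by metis
qed

lemma emb_bw_out: "x \<notin> h ` Y \<Longrightarrow> fst ` c \<subseteq> Y \<Longrightarrow> block_word (emb h c) x = 0"
  by (rule bw_notmem) (auto simp: emb_fst)

lemma emb_ham:
  assumes "inj_on h Y" "h ` Y \<subseteq> X" "fst ` c1 \<subseteq> Y" "fst ` c2 \<subseteq> Y" "inj_on fst c1" "inj_on fst c2"
  shows "hamming_dist X (block_word (emb h c1)) (block_word (emb h c2))
       = hamming_dist Y (block_word c1) (block_word c2)"
proof -
  have "{x\<in>X. block_word (emb h c1) x \<noteq> block_word (emb h c2) x}
      = h ` {y\<in>Y. block_word c1 y \<noteq> block_word c2 y}" (is "?L = ?R")
  proof
    show "?L \<subseteq> ?R"
    proof
      fix x assume x: "x \<in> ?L"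
      show "x \<in> ?R"
      proof (cases "x \<in> h ` Y")
        case True
        then obtain y where y: "y \<in> Y" "x = h y" by blast
        then show ?thesis using x emb_bw_in[OF assms(1,3,5) y(1)] emb_bw_in[OF assms(1,4,6) y(1)] by auto
      next
        case False
        then show ?thesis using x emb_bw_out[OF False assms(3)] emb_bw_out[OF False assms(4)] by simp
      qed
    qed
  next
    show "?R \<subseteq> ?L"
      using emb_bw_in[OF assms(1,3,5)] emb_bw_in[OF assms(1,4,6)] assms(2) by auto
  qed
  moreover have "inj_on h {y\<in>Y. block_word c1 y \<noteq> block_word c2 y}"
    using assms(1) by (rule inj_on_subset) auto
  ultimately show ?thesis unfolding hamming_dist_def by (simp add: card_image)
qed

lemma cross_ham:
  assumes "finite X" "c1 \<subseteq> X \<times> {1..g}" "c2 \<subseteq> X \<times> {1..g}" "inj_on fst c1" "inj_on fst c2"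
  shows "hamming_dist X (block_word c1) (block_word c2)
     \<ge> card (fst ` c1 - fst ` c2) + card (fst ` c2 - fst ` c1)"
proof -
  have "(fst ` c1 - fst ` c2) \<union> (fst ` c2 - fst ` c1) \<subseteq> {x\<in>X. block_word c1 x \<noteq> block_word c2 x}"
  proof
    fix x assume x: "x \<in> (fst ` c1 - fst ` c2) \<union> (fst ` c2 - fst ` c1)"
    have "x \<in> X" using x assms(2,3) by auto
    moreover have "block_word c1 x \<noteq> block_word c2 x"
    proof (cases "x \<in> fst ` c1")
      case True
      then have "x \<notin> fst ` c2" using x by blast
      then show ?thesis using bw_pos[OF assms(2,4) True] bw_notmem[of x c2] by simp
    next
      case False
      then have "x \<in> fst ` c2" using x by blast
      then show ?thesis using bw_pos[OF assms(3,5)] bw_notmem[OF False] by simp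
    qed
    ultimately show "x \<in> {x\<in>X. block_word c1 x \<noteq> block_word c2 x}" by simp
  qed
  hence "card ((fst ` c1 - fst ` c2) \<union> (fst ` c2 - fst ` c1)) \<le> hamming_dist X (block_word c1) (block_word c2)"
    unfolding hamming_dist_def using assms(1) by (intro card_mono) auto
  moreover have "card ((fst ` c1 - fst ` c2) \<union> (fst ` c2 - fst ` c1)) = card (fst ` c1 - fst ` c2) + card (fst ` c2 - fst ` c1)"
  proof (rule card_Un_disjoint)
    have "fst ` c1 \<subseteq> X" "fst ` c2 \<subseteq> X" using assms(2,3) by auto
    then show "finite (fst ` c1 - fst ` c2)" "finite (fst ` c2 - fst ` c1)"
      using assms(1) by (meson Diff_subset finite_subset)+
  qed auto
  ultimately show ?thesis by simp
qed

theorem lemma3p8: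
  fixes t w w' n g :: nat
  assumes "t > 0" "w > 0" "w' > 0" "n > 0" "g > 0"
    and "exists_steiner t w' n"
    and "exists_gmhp_star t w w' g"
  shows "exists_gmhp_star t w n g"
proof -
  obtain X :: "nat set" and SB where X: "finite X" "card X = n" and st: "steiner_system t w' X SB"
    using assms(6) unfolding exists_steiner_def by blast
  obtain Y :: "nat set" and B' where Y: "finite Y" "card Y = w'" and gm: "gmhp_star t w Y g B'"
    using assms(7) unfolding exists_gmhp_star_def by blast
  show ?thesis
  proof (cases "n < t \<or> w < t")
    case True
    have "gmhp_star t w X g {}"
      unfolding gmhp_star_def h_packing_def using True X by auto
    then show ?thesis using X unfolding exists_gmhp_star_def by blast
  next
    case False
    hence tn: "t \<le> n" and tw: "t \<le> w" by auto
    have SBsub: "\<And>S. S \<in> SB \<Longrightarrow> S \<subseteq> X \<and> card S = w'"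
      using st unfolding steiner_system_def by blast
    have uniq: "\<And>T. T \<subseteq> X \<Longrightarrow> card T = t \<Longrightarrow> \<exists>!S. S \<in> SB \<and> T \<subseteq> S"
      using conjunct2[OF st[unfolded steiner_system_def]] by simp
    have uex: "\<exists>S\<in>SB. T \<subseteq> S" if "T \<subseteq> X" "card T = t" for T
      using uniq[OF that] by auto
    have uni2: "S1 = S2" if "T \<subseteq> X" "card T = t" "S1 \<in> SB" "S2 \<in> SB" "T \<subseteq> S1" "T \<subseteq> S2" for T S1 S2
      using uniq[OF that(1,2)] that(3-6) by auto
    obtain T0 where T0: "T0 \<subseteq> X" "card T0 = t" using obtain_subset_with_card_n tn X by metis
    then obtain S0 where S0: "S0 \<in> SB" "T0 \<subseteq> S0" using uex by blast
    have tw': "t \<le> w'" using card_mono[OF finite_subset[OF _ X(1)] S0(2)] SBsub[OF S0(1)] T0 by auto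
    have inter: "card (S1 \<inter> S2) < t" if a: "S1 \<in> SB" "S2 \<in> SB" "S1 \<noteq> S2" for S1 S2
    proof (rule ccontr)
      assume "\<not> card (S1 \<inter> S2) < t"
      then obtain T where T: "T \<subseteq> S1 \<inter> S2" "card T = t" using obtain_subset_with_card_n
        by (metis not_less)
      moreover have "T \<subseteq> X" using T(1) SBsub[OF a(1)] by auto
      ultimately show False using uni2[of T S1 S2] a by auto
    qed
    have finSB: "finite SB" using SBsub X(1)
      by (metis Pow_iff finite_Pow_iff finite_subset subsetI)
    have "{T. T \<subseteq> X \<and> card T = t} = (\<Union>S\<in>SB. {T. T \<subseteq> S \<and> card T = t})"
    proof (intro equalityI subsetI)
      fix T assume "T \<in> {T. T \<subseteq> X \<and> card T = t}"
      then have "T \<subseteq> X" "card T = t" by auto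
      then obtain S where "S \<in> SB" "T \<subseteq> S" using uex by blast
      then show "T \<in> (\<Union>S\<in>SB. {T. T \<subseteq> S \<and> card T = t})" using \<open>card T = t\<close> by auto
    next
      fix T assume "T \<in> (\<Union>S\<in>SB. {T. T \<subseteq> S \<and> card T = t})"
      then obtain S where "S \<in> SB" "T \<subseteq> S" "card T = t" by auto
      then show "T \<in> {T. T \<subseteq> X \<and> card T = t}" using SBsub by auto
    qed
    hence "n choose t = card (\<Union>S\<in>SB. {T. T \<subseteq> S \<and> card T = t})"
      using n_subsets[OF X(1), of t] X(2) by simp
    also have "\<dots> = (\<Sum>S\<in>SB. card {T. T \<subseteq> S \<and> card T = t})"
    proof (rule card_UN_disjoint[OF finSB])
      show "\<forall>S\<in>SB. finite {T. T \<subseteq> S \<and> card T = t}"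
        using SBsub X(1) by (metis (no_types, lifting) finite_Collect_subsets finite_subset mem_Collect_eq subsetI)
      show "\<forall>S1\<in>SB. \<forall>S2\<in>SB. S1 \<noteq> S2 \<longrightarrow> {T. T \<subseteq> S1 \<and> card T = t} \<inter> {T. T \<subseteq> S2 \<and> card T = t} = {}"
      proof (intro ballI impI)
        fix S1 S2 assume a: "S1 \<in> SB" "S2 \<in> SB" "S1 \<noteq> S2"
        show "{T. T \<subseteq> S1 \<and> card T = t} \<inter> {T. T \<subseteq> S2 \<and> card T = t} = {}"
        proof (rule ccontr)
          assume "{T. T \<subseteq> S1 \<and> card T = t} \<inter> {T. T \<subseteq> S2 \<and> card T = t} \<noteq> {}"
          then obtain T where T: "T \<subseteq> S1" "T \<subseteq> S2" "card T = t" by auto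
          have "T \<subseteq> X" using T(1) SBsub[OF a(1)] by auto
          then show False using uni2[OF _ T(3) a(1,2) T(1,2)] a(3) by auto
        qed
      qed
    qed
    also have "\<dots> = (\<Sum>S\<in>SB. w' choose t)"
      using SBsub X(1) by (intro sum.cong refl) (metis n_subsets finite_subset)
    finally have countSB: "card SB * (w' choose t) = n choose t" by simp
    have hp: "h_packing Y g w t B'" and dist: "\<And>b b'. b \<in> B' \<Longrightarrow> b' \<in> B' \<Longrightarrow> b \<noteq> b' \<Longrightarrow>
        hamming_dist Y (block_word b) (block_word b') \<ge> 2 * (w - t + 1)"
      and finB': "finite B'"
      and cardB': "(of_nat (card B') :: rat) = of_nat (g ^ (t - 1) * (w' choose t)) / of_nat (w choose t)"
      using gm Y unfolding gmhp_star_def by auto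
    have B'blk: "\<And>c. c \<in> B' \<Longrightarrow> c \<subseteq> Y \<times> {1..g} \<and> card c = w \<and> inj_on fst c"
      using hp unfolding h_packing_def hpoints_def by blast
    have B'pack: "\<And>T. T \<subseteq> Y \<times> {1..g} \<Longrightarrow> card T = t \<Longrightarrow> inj_on fst T \<Longrightarrow> card {b\<in>B'. T \<subseteq> b} \<le> 1"
      using hp unfolding h_packing_def hpoints_def by blast
    have B'fst: "\<And>c. c \<in> B' \<Longrightarrow> fst ` c \<subseteq> Y" using B'blk by force
    define f :: "nat set \<Rightarrow> nat \<Rightarrow> nat" where "f S = (SOME h. bij_betw h Y S)" for S
    have fbij: "bij_betw (f S) Y S" if "S \<in> SB" for S
    proof -
      have "\<exists>h. bij_betw h Y S" using SBsub[OF that] Y X(1)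
        by (intro finite_same_card_bij) (auto intro: finite_subset)
      then show ?thesis unfolding f_def by (rule someI_ex)
    qed
    have finj: "inj_on (f S) Y" and fim: "f S ` Y = S" if "S \<in> SB" for S
      using fbij[OF that] unfolding bij_betw_def by auto
    define E where "E S c = emb (f S) c" for S c
    have Efst: "fst ` E S c \<subseteq> S" if "S \<in> SB" "c \<in> B'" for S c
      using B'fst[OF that(2)] fim[OF that(1)] unfolding E_def emb_fst by blast
    have Esub: "E S c \<subseteq> X \<times> {1..g}" if "S \<in> SB" "c \<in> B'" for S c
    proof -
      have "snd ` E S c \<subseteq> {1..g}" using B'blk[OF that(2)] unfolding E_def emb_def by force
      then show ?thesis using Efst[OF that] SBsub[OF that(1)] by force
    qed
    have Ecard: "card (E S c) = w" if "S \<in> SB" "c \<in> B'" for S c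
      unfolding E_def using emb_card[OF finj[OF that(1)] B'fst[OF that(2)]] B'blk[OF that(2)] by simp
    have Einj: "inj_on fst (E S c)" if "S \<in> SB" "c \<in> B'" for S c
      unfolding E_def using emb_inj_fst[OF finj[OF that(1)] B'fst[OF that(2)]] B'blk[OF that(2)] by simp
    have Efcard: "card (fst ` E S c) = w" if "S \<in> SB" "c \<in> B'" for S c
      using card_image[OF Einj[OF that]] Ecard[OF that] by simp
    define NB where "NB = (\<Union>S\<in>SB. E S ` B')"
    have NBblk: "b \<subseteq> hpoints X g \<and> card b = w \<and> inj_on fst b" if "b \<in> NB" for b
      using that Esub Ecard Einj unfolding NB_def hpoints_def by blast
    have NBpack: "card {b\<in>NB. T \<subseteq> b} \<le> 1"
      if T: "T \<subseteq> hpoints X g" "card T = t" "inj_on fst T" for T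
    proof -
      have P: "fst ` T \<subseteq> X" "card (fst ` T) = t"
        using T card_image[OF T(3)] unfolding hpoints_def by auto
      then obtain S where S: "S \<in> SB" "fst ` T \<subseteq> S" using uex by blast
      define T' where "T' = {p \<in> Y \<times> {1..g}. (f S (fst p), snd p) \<in> T}"
      have "{b\<in>NB. T \<subseteq> b} \<subseteq> E S ` {c\<in>B'. T' \<subseteq> c}"
      proof
        fix b assume b: "b \<in> {b\<in>NB. T \<subseteq> b}"
        then obtain S1 c where S1: "S1 \<in> SB" "c \<in> B'" "b = E S1 c" unfolding NB_def by blast
        have "fst ` T \<subseteq> S1" using b S1 Efst[OF S1(1,2)] by auto
        hence "S1 = S" using uni2[OF P S1(1) S(1)] S by blast
        have "T' \<subseteq> c"
        proof
          fix p assume p: "p \<in> T'"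
          then have "(f S (fst p), snd p) \<in> E S c" using b S1 \<open>S1 = S\<close> unfolding T'_def by auto
          then obtain q where q: "q \<in> c" "f S (fst p) = f S (fst q)" "snd p = snd q"
            unfolding E_def emb_def by auto
          have "fst q \<in> Y" using q(1) B'fst[OF S1(2)] by auto
          moreover have "fst p \<in> Y" using p unfolding T'_def by auto
          ultimately have "fst p = fst q" using q(2) finj[OF S(1)] unfolding inj_on_def by blast
          then show "p \<in> c" using q by (metis prod.collapse)
        qed
        then show "b \<in> E S ` {c\<in>B'. T' \<subseteq> c}" using S1 \<open>S1 = S\<close> by blast
      qed
      moreover have pk: "card {c\<in>B'. T' \<subseteq> c} \<le> 1"
      proof (rule B'pack)
        show "T' \<subseteq> Y \<times> {1..g}" unfolding T'_def by auto
        have ei: "inj_on (\<lambda>(y,a). (f S y, a)) T'"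
          by (rule emb_inj[OF finj[OF S(1)]]) (auto simp: T'_def)
        have "(\<lambda>(y,a). (f S y, a)) ` T' = T"
        proof
          show "(\<lambda>(y,a). (f S y, a)) ` T' \<subseteq> T" unfolding T'_def by auto
          show "T \<subseteq> (\<lambda>(y,a). (f S y, a)) ` T'"
          proof
            fix p assume p: "p \<in> T"
            then have "fst p \<in> f S ` Y" using S fim[OF S(1)] by auto
            then obtain y where y: "y \<in> Y" "fst p = f S y" by auto
            have "snd p \<in> {1..g}" using p T(1) unfolding hpoints_def by auto
            moreover have "(f S y, snd p) = p" using y(2) by (simp add: prod_eq_iff)
            ultimately have "(y, snd p) \<in> T'" using y(1) p unfolding T'_def by simp
            moreover have "p = (\<lambda>(y,a). (f S y, a)) (y, snd p)" using y by (simp add: prod_eq_iff)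
            ultimately show "p \<in> (\<lambda>(y,a). (f S y, a)) ` T'" by blast
          qed
        qed
        then show "card T' = t" using card_image[OF ei] T(2) by simp
        show "inj_on fst T'"
        proof (rule inj_onI)
          fix p q assume pq: "p \<in> T'" "q \<in> T'" "fst p = fst q"
          then have "(f S (fst p), snd p) \<in> T" "(f S (fst p), snd q) \<in> T" unfolding T'_def by auto
          then have "snd p = snd q" using T(3) unfolding inj_on_def by fastforce
          then show "p = q" using pq(3) by (simp add: prod_eq_iff)
        qed
      qed
      ultimately have "card {b\<in>NB. T \<subseteq> b} \<le> card (E S ` {c\<in>B'. T' \<subseteq> c})"
        by (intro card_mono) (use finB' in auto)
      also have "\<dots> \<le> card {c\<in>B'. T' \<subseteq> c}" by (rule card_image_le) (use finB' in auto)
      finally show ?thesis using pk by simp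
    qed
    have NBdist: "hamming_dist X (block_word b) (block_word b') \<ge> 2 * (w - t + 1)"
      if bb: "b \<in> NB" "b' \<in> NB" "b \<noteq> b'" for b b'
    proof -
      obtain S1 c1 where S1: "S1 \<in> SB" "c1 \<in> B'" "b = E S1 c1" using bb(1) unfolding NB_def by blast
      obtain S2 c2 where S2: "S2 \<in> SB" "c2 \<in> B'" "b' = E S2 c2" using bb(2) unfolding NB_def by blast
      show ?thesis
      proof (cases "S1 = S2")
        case True
        then have "c1 \<noteq> c2" using bb S1 S2 by auto
        have "hamming_dist X (block_word b) (block_word b') = hamming_dist Y (block_word c1) (block_word c2)"
          unfolding S1(3) S2(3) E_def True
          by (rule emb_ham[OF finj[OF S2(1)]]) (use fim[OF S2(1)] SBsub[OF S2(1)] B'fst[OF S1(2)] B'fst[OF S2(2)] B'blk[OF S1(2)] B'blk[OF S2(2)] in auto)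
        then show ?thesis using dist[OF S1(2) S2(2) \<open>c1 \<noteq> c2\<close>] by simp
      next
        case False
        let ?F1 = "fst ` b" and ?F2 = "fst ` b'"
        have "?F1 \<inter> ?F2 \<subseteq> S1 \<inter> S2" using Efst S1 S2 by blast
        hence ci: "card (?F1 \<inter> ?F2) < t"
          using inter[OF S1(1) S2(1) False] card_mono[of "S1 \<inter> S2"] SBsub[OF S1(1)] X(1)
          by (meson finite_Int finite_subset le_less_trans)
        have fin: "finite (?F1 \<inter> ?F2)" using Esub[OF S1(1,2)] X(1) S1(3)
          by (meson finite_Int finite_imageI finite_SigmaI finite_atLeastAtMost finite_subset)
        have c1: "card (?F1 - ?F2) = w - card (?F1 \<inter> ?F2)"
          using card_Diff_subset_Int[OF fin] Efcard S1 by simp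
        have c2: "card (?F2 - ?F1) = w - card (?F1 \<inter> ?F2)"
          using card_Diff_subset_Int[of ?F2 ?F1] fin Efcard S2 by (simp add: Int_commute)
        have "hamming_dist X (block_word b) (block_word b') \<ge> card (?F1 - ?F2) + card (?F2 - ?F1)"
          by (rule cross_ham[OF X(1)]) (use Esub Einj S1 S2 in auto)
        then show ?thesis using c1 c2 ci tw by arith
      qed
    qed
    have Edisj: "E S1 ` B' \<inter> E S2 ` B' = {}" if "S1 \<in> SB" "S2 \<in> SB" "S1 \<noteq> S2" for S1 S2
    proof (rule ccontr)
      assume "E S1 ` B' \<inter> E S2 ` B' \<noteq> {}"
      then obtain c1 c2 where c: "c1 \<in> B'" "c2 \<in> B'" "E S1 c1 = E S2 c2" by blast
      then have "fst ` E S1 c1 \<subseteq> S1 \<inter> S2" using Efst that by (metis le_inf_iff)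
      then have "w \<le> card (S1 \<inter> S2)" using Efcard[OF that(1) c(1)] SBsub that X(1)
        by (metis card_mono finite_Int finite_subset)
      then show False using inter[OF that] tw by simp
    qed
    have Einjs: "inj_on (E S) B'" if "S \<in> SB" for S
    proof (rule inj_onI)
      fix c1 c2 assume c: "c1 \<in> B'" "c2 \<in> B'" "E S c1 = E S c2"
      have "inj_on (\<lambda>(y,a). (f S y, a)) (c1 \<union> c2)"
        by (rule emb_inj[OF finj[OF that]]) (use B'fst c in auto)
      then show "c1 = c2" using c(3) unfolding E_def emb_def by (meson inj_on_image_eq_iff sup_ge1 sup_ge2)
    qed
    have "card NB = (\<Sum>S\<in>SB. card (E S ` B'))"
      unfolding NB_def using finSB finB' Edisj by (intro card_UN_disjoint) auto
    also have "\<dots> = card SB * card B'" using card_image[OF Einjs] by simp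
    finally have cardNB: "card NB = card SB * card B'" .
    have finNB: "finite NB" unfolding NB_def using finSB finB' by auto
    have "(of_nat (card NB) :: rat) = of_nat (card SB) * (of_nat (g ^ (t - 1) * (w' choose t)) / of_nat (w choose t))"
      using cardNB cardB' by simp
    also have "\<dots> = of_nat (g ^ (t - 1) * (card SB * (w' choose t))) / of_nat (w choose t)"
      by (simp add: mult.left_commute)
    also have "\<dots> = of_nat (g ^ (t - 1) * (card X choose t)) / of_nat (w choose t)"
      using countSB X(2) by simp
    finally have "gmhp_star t w X g NB"
      unfolding gmhp_star_def h_packing_def using NBblk NBpack NBdist finNB by blast
    then show ?thesis using X unfolding exists_gmhp_star_def by blast
  qed
qed

end
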